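(* Let $d_1\ge1$, $d_2\ge1$, and in $\mathbb{R}^{d_1}_x\times\mathbb{R}^{d_2}_y$ let $N=\{y_1=0\}$ with coordinates $(x,y')=(\tilde x,x'',\tilde y,y'')\in\mathbb{R}^{p_1}\times\mathbb{R}^{d_1-p_1}\times\mathbb{R}^{p_2}\times\mathbb{R}^{d_2-p_2-1}$, where $0\le p_1\le d_1$, $0\le p_2\le d_2-1$ and $(d_1-p_1)+(d_2-1-p_2)\ge1$, and let $M=\{y_1=0,\ x''=0,\ y''=0\}\subseteq N$. Then for every integer $k\ge0$ there exist Cauchy data $(u_0,u_1)$ on $N$, not both identically zero, which satisfy the constraint $\mathrm{supp}(\hat u_0,\hat u_1)\subseteq\{(\xi,\eta'):|\eta'|<|\xi|\}$ and vanish to order $k$ on $M$ (i.e. all partial derivatives of $u_0$ and $u_1$ of order at most $k$ vanish on $M$).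
   Context: The Fourier transform is taken in $(x,y')$ with dual variables $(\xi,\eta')\in\mathbb{R}^{d_1}\times\mathbb{R}^{d_2-1}$. Data satisfying this support constraint are the "constraint-satisfying" Cauchy data for $\partial_{y_1}^2u=\Delta_xu-\Delta_{y'}u$, giving globally defined solutions in $y_1$. *)

theory Defs
  imports "HOL-Analysis.Analysis"
begin

text \<open>Points of the hypersurface N = {y1 = 0} are modelled as vectors in real^'n, where the
  coordinate index set UNIV::'n set is partitioned into X (the x-coordinates, d1 of them) and
  Y (the y'-coordinates, d2-1 of them, possibly none).\<close>

definition pnorm :: "'n set \<Rightarrow> real^'n \<Rightarrow> real" where
  "pnorm I v = sqrt (\<Sum>i\<in>I. (v $ i)\<^sup>2)"

definition pd :: "'n::finite \<Rightarrow> (real^'n \<Rightarrow> complex) \<Rightarrow> real^'n \<Rightarrow> complex" where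
  "pd i f = (\<lambda>z. vector_derivative (\<lambda>t. f (z + t *\<^sub>R axis i 1)) (at 0))"

fun iter_pd :: "'n::finite list \<Rightarrow> (real^'n \<Rightarrow> complex) \<Rightarrow> real^'n \<Rightarrow> complex" where
  "iter_pd [] f = f"
| "iter_pd (i # is) f = pd i (iter_pd is f)"

definition smooth_fun :: "(real^'n::finite \<Rightarrow> complex) \<Rightarrow> bool" where
  "smooth_fun f \<longleftrightarrow> (\<forall>is. continuous_on UNIV (iter_pd is f) \<and>
      (\<forall>i z. (\<lambda>t. iter_pd is f (z + t *\<^sub>R axis i 1)) differentiable (at 0)))"

definition fourier :: "(real^'n::finite \<Rightarrow> complex) \<Rightarrow> real^'n \<Rightarrow> complex" where
  "fourier u \<xi> = integral\<^sup>L lborel (\<lambda>z. exp (- \<i> * complex_of_real (\<xi> \<bullet> z)) * u z)"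

definition fsupp :: "(real^'n::finite \<Rightarrow> complex) \<Rightarrow> (real^'n) set" where
  "fsupp u = closure {\<xi>. fourier u \<xi> \<noteq> 0}"

definition vanish_order :: "nat \<Rightarrow> (real^'n) set \<Rightarrow> (real^'n::finite \<Rightarrow> complex) \<Rightarrow> bool" where
  "vanish_order k M f \<longleftrightarrow> (\<forall>is z. length is \<le> k \<longrightarrow> z \<in> M \<longrightarrow> iter_pd is f z = 0)"

end

theory Submission
  imports Defs "HOL-Probability.Probability" "HOL-Complex_Analysis.Complex_Analysis"
begin

no_notation fps_nth (infixl \<open>$\<close> 75)


definition Sf :: "complex \<Rightarrow> complex" where
  "Sf w = (if w = 0 then 1 else sin w / w)"

lemma Sf_holo: "Sf holomorphic_on UNIV"
proof -
  have "(\<lambda>z. if z = 0 then deriv sin 0 else (sin z - sin 0) / (z - 0)) holomorphic_on UNIV"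
    by (rule pole_lemma_open) (auto intro!: holomorphic_intros)
  moreover have "deriv sin 0 = (1::complex)"
    using DERIV_sin[of "0::complex"] DERIV_imp_deriv by fastforce
  ultimately have "(\<lambda>z. if z = 0 then deriv sin 0 else (sin z - sin 0) / (z - 0)) = Sf"
    by (simp add: fun_eq_iff Sf_def)
  with \<open>_ holomorphic_on UNIV\<close> show ?thesis by simp
qed

definition Hf :: "complex \<Rightarrow> complex" where
  "Hf w = Sf (w / 2) ^ 2"

lemma Hf_holo: "Hf holomorphic_on UNIV"
proof -
  have "(Sf \<circ> (\<lambda>w. w / 2)) holomorphic_on UNIV"
    by (rule holomorphic_on_compose_gen[OF _ Sf_holo]) (auto intro!: holomorphic_intros)
  then show ?thesis unfolding Hf_def by (auto intro!: holomorphic_intros simp: o_def)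
qed

lemma Hf_real: "t \<noteq> 0 \<Longrightarrow> Hf (of_real t) = of_real (2 * (1 - cos t) / t^2)"
proof -
  assume t: "t \<noteq> 0"
  have "Hf (of_real t) = of_real ((sin (t/2) / (t/2))^2)"
    using t by (simp add: Hf_def Sf_def sin_of_real[symmetric])
  also have "(sin (t/2) / (t/2))^2 = 2 * (1 - cos t) / t^2"
  proof -
    have "cos t = 1 - 2 * sin (t/2)^2" using cos_double_sin[of "t/2"] by simp
    then show ?thesis using t by (simp add: field_simps power2_eq_square)
  qed
  finally show ?thesis .
qed

lemma Hf_0: "Hf 0 = 1" by (simp add: Hf_def Sf_def)

definition Gf :: "real \<Rightarrow> nat \<Rightarrow> complex \<Rightarrow> complex" where
  "Gf R k w = exp (\<i> * of_real R * w) * (exp (\<i> * w) - 1) ^ Suc k * Hf w"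

lemma Gf_holo: "Gf R k holomorphic_on UNIV"
  unfolding Gf_def by (auto intro!: holomorphic_intros Hf_holo[THEN holomorphic_on_subset])

lemma hd_holo: "(deriv ^^ n) (Gf R k) holomorphic_on UNIV"
  by (rule holomorphic_higher_deriv[OF Gf_holo]) auto

lemma hd_deriv: "((deriv ^^ n) (Gf R k) has_field_derivative (deriv ^^ Suc n) (Gf R k) w) (at w)"
  using holomorphic_derivI[OF hd_holo[of n R k] open_UNIV, of w] by simp

lemma hd_vec_deriv:
  "((\<lambda>t. (deriv ^^ n) (Gf R k) (of_real t)) has_vector_derivative
      (deriv ^^ Suc n) (Gf R k) (of_real t)) (at t within s)"
  by (rule has_vector_derivative_real_field[OF hd_deriv])

lemma hd_cont: "continuous_on UNIV (\<lambda>t. (deriv ^^ n) (Gf R k) (of_real t))"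
proof -
  have "continuous_on UNIV ((deriv ^^ n) (Gf R k))"
    using hd_holo holomorphic_on_imp_continuous_on by blast
  then show ?thesis
    by (rule continuous_on_compose2) (auto intro!: continuous_intros)
qed

lemma vanish_aux:
  fixes h :: "complex \<Rightarrow> complex"
  assumes h: "h holomorphic_on UNIV" and h0: "h 0 = 0"
  shows "Q holomorphic_on UNIV \<Longrightarrow> m < n \<Longrightarrow> (deriv ^^ m) (\<lambda>w. h w ^ n * Q w) 0 = 0"
proof (induction m arbitrary: n Q)
  case 0
  then show ?case using h0 by simp
next
  case (Suc m)
  then obtain n' where n: "n = Suc n'" by (cases n) auto
  define Q' where "Q' w = of_nat n * deriv h w * Q w + h w * deriv Q w" for w
  have Q'h: "Q' holomorphic_on UNIV"
    unfolding Q'_def using h Suc.prems(1)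
    by (auto intro!: holomorphic_intros holomorphic_deriv)
  have "deriv (\<lambda>w. h w ^ n * Q w) = (\<lambda>w. h w ^ n' * Q' w)"
  proof
    fix w
    have dh: "(h has_field_derivative deriv h w) (at w)"
      using holomorphic_derivI[OF h open_UNIV] by auto
    have dQ: "(Q has_field_derivative deriv Q w) (at w)"
      using holomorphic_derivI[OF Suc.prems(1) open_UNIV] by auto
    have "((\<lambda>w. h w ^ n * Q w) has_field_derivative
            (of_nat n * h w ^ n' * deriv h w) * Q w + h w ^ n * deriv Q w) (at w)"
      using DERIV_mult[OF DERIV_power[OF dh, of n] dQ] n by (simp add: algebra_simps)
    moreover have "(of_nat n * h w ^ n' * deriv h w) * Q w + h w ^ n * deriv Q w = h w ^ n' * Q' w"
      unfolding Q'_def n by (simp add: algebra_simps)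
    ultimately show "deriv (\<lambda>w. h w ^ n * Q w) w = h w ^ n' * Q' w"
      using DERIV_imp_deriv by metis
  qed
  then have "(deriv ^^ Suc m) (\<lambda>w. h w ^ n * Q w) = (deriv ^^ m) (\<lambda>w. h w ^ n' * Q' w)"
    by (simp add: funpow_Suc_right del: funpow.simps)
  then show ?case using Suc.IH[OF Q'h] Suc.prems n by simp
qed

lemma Gf_vanish: "m \<le> k \<Longrightarrow> (deriv ^^ m) (Gf R k) 0 = 0"
proof -
  assume m: "m \<le> k"
  have "Gf R k = (\<lambda>w. (exp (\<i> * w) - 1) ^ Suc k * (exp (\<i> * of_real R * w) * Hf w))"
    by (simp add: Gf_def fun_eq_iff algebra_simps)
  moreover have "(deriv ^^ m) (\<lambda>w. (exp (\<i> * w) - 1) ^ Suc k * (exp (\<i> * of_real R * w) * Hf w)) 0 = 0"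
    by (rule vanish_aux) (use m in \<open>auto intro!: holomorphic_intros Hf_holo[THEN holomorphic_on_subset]\<close>)
  ultimately show ?thesis by simp
qed




definition Pc :: "('n::finite \<Rightarrow> real) \<Rightarrow> nat \<Rightarrow> ('n \<Rightarrow> nat) \<Rightarrow> real^'n \<Rightarrow> complex" where
  "Pc R k c z = (\<Prod>i\<in>UNIV. (deriv ^^ c i) (Gf (R i) k) (of_real (z $ i)))"

lemma Pc_line:
  fixes z :: "real^'n::finite"
  shows "((\<lambda>t. Pc R k c (z + t *\<^sub>R axis j 1)) has_vector_derivative Pc R k (c(j := Suc (c j))) z) (at 0)"
proof -
  define C where "C = (\<Prod>i\<in>UNIV - {j}. (deriv ^^ c i) (Gf (R i) k) (of_real (z $ i)))"
  define f where "f w = (deriv ^^ c j) (Gf (R j) k) (of_real (z $ j) + w) * C" for w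
  have eq: "Pc R k c (z + t *\<^sub>R axis j 1) = f (of_real t)" for t
  proof -
    have "Pc R k c (z + t *\<^sub>R axis j 1) =
       (deriv ^^ c j) (Gf (R j) k) (of_real (z $ j + t)) *
        (\<Prod>i\<in>UNIV - {j}. (deriv ^^ c i) (Gf (R i) k) (of_real ((z + t *\<^sub>R axis j 1) $ i)))"
      unfolding Pc_def by (subst prod.remove[of _ j]) (auto simp: axis_def)
    also have "(\<Prod>i\<in>UNIV - {j}. (deriv ^^ c i) (Gf (R i) k) (of_real ((z + t *\<^sub>R axis j 1) $ i))) = C"
      unfolding C_def by (rule prod.cong) (auto simp: axis_def)
    finally show ?thesis by (simp add: f_def)
  qed
  have "(f has_field_derivative (deriv ^^ Suc (c j)) (Gf (R j) k) (of_real (z $ j)) * C) (at (of_real 0))"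
  proof -
    have d0: "((\<lambda>w. of_real (z $ j) + w) has_field_derivative 1) (at (0::complex))"
      by (auto intro!: derivative_eq_intros)
    have "((\<lambda>w. (deriv ^^ c j) (Gf (R j) k) (of_real (z $ j) + w)) has_field_derivative
          (deriv ^^ Suc (c j)) (Gf (R j) k) (of_real (z $ j) + 0) * 1) (at 0)"
      by (rule DERIV_chain2[OF hd_deriv d0])
    then have "((\<lambda>w. (deriv ^^ c j) (Gf (R j) k) (of_real (z $ j) + w)) has_field_derivative
          (deriv ^^ Suc (c j)) (Gf (R j) k) (of_real (z $ j))) (at 0)"
      by (simp only: add_0_right mult_1_right)
    then have "(f has_field_derivative (deriv ^^ Suc (c j)) (Gf (R j) k) (of_real (z $ j)) * C) (at 0)"
      unfolding f_def by (rule DERIV_cmult_right)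
    then show ?thesis by (simp only: of_real_0)
  qed
  then have "((\<lambda>t. f (of_real t)) has_vector_derivative (deriv ^^ Suc (c j)) (Gf (R j) k) (of_real (z $ j)) * C) (at 0)"
    by (rule has_vector_derivative_real_field)
  moreover have "(deriv ^^ Suc (c j)) (Gf (R j) k) (of_real (z $ j)) * C = Pc R k (c(j := Suc (c j))) z"
    unfolding Pc_def C_def by (subst (2) prod.remove[of _ j]) (auto intro!: prod.cong)
  ultimately show ?thesis using eq by simp
qed

lemma pd_Pc: "pd j (Pc R k c) = Pc R k (c(j := Suc (c j)))"
  unfolding pd_def by (rule ext) (rule vector_derivative_at[OF Pc_line])

lemma iter_pd_Pc: "iter_pd is (Pc R k c) = Pc R k (\<lambda>i. c i + count_list is i)"
proof (induction "is")
  case Nil then show ?case by simp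
next
  case (Cons j js)
  have "(\<lambda>i. c i + count_list js i)(j := Suc (c j + count_list js j)) = (\<lambda>i. c i + count_list (j # js) i)"
    by (auto simp: fun_eq_iff)
  then show ?case using Cons by (simp add: pd_Pc)
qed

lemma Pc_cont:
  fixes R :: "'n::finite \<Rightarrow> real"
  shows "continuous_on UNIV (Pc R k c)"
proof -
  have "continuous_on UNIV (\<lambda>z::real^'n. (deriv ^^ c i) (Gf (R i) k) (of_real (z $ i)))" for i
  proof -
    have A: "continuous_on UNIV (\<lambda>z::real^'n. z $ i)" by (intro continuous_intros)
    show ?thesis using continuous_on_compose2[OF hd_cont[of "c i" "R i" k] A] by simp
  qed
  then show ?thesis unfolding Pc_def by (intro continuous_on_prod) auto
qed


lemma smooth_Pc: "smooth_fun (Pc R k (\<lambda>_. 0))"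
  unfolding smooth_fun_def iter_pd_Pc
  using Pc_cont Pc_line differentiableI_vector by blast


definition tri :: "real \<Rightarrow> real" where "tri x = max 0 (1 - \<bar>x\<bar>)"

lemma tri_nonneg: "0 \<le> tri x" by (simp add: tri_def)
lemma tri_le1: "tri x \<le> 1" by (simp add: tri_def)
lemma tri_out: "1 \<le> \<bar>x\<bar> \<Longrightarrow> tri x = 0" by (simp add: tri_def)
lemma tri_cont: "continuous_on UNIV tri" unfolding tri_def by (intro continuous_intros)
lemma tri_meas[measurable]: "tri \<in> borel_measurable borel"
  using tri_cont borel_measurable_continuous_onI by blast

lemma tri_has_integral: "(tri has_integral 1) UNIV"
proof -
  have a: "(tri has_integral ((\<lambda>x::real. x + x^2/2) 0 - (\<lambda>x::real. x + x^2/2) (-1))) {-1..0}"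
  proof -
    have "((\<lambda>x::real. 1 + x) has_integral ((\<lambda>x::real. x + x^2/2) 0 - (\<lambda>x::real. x + x^2/2) (-1))) {-1..0}"
      by (rule fundamental_theorem_of_calculus) (auto simp: has_real_derivative_iff_has_vector_derivative[symmetric] intro!: derivative_eq_intros)
    then show ?thesis by (rule has_integral_eq[rotated]) (auto simp: tri_def)
  qed
  have b: "(tri has_integral ((\<lambda>x::real. x - x^2/2) 1 - (\<lambda>x::real. x - x^2/2) 0)) {0..1}"
  proof -
    have "((\<lambda>x::real. 1 - x) has_integral ((\<lambda>x::real. x - x^2/2) 1 - (\<lambda>x::real. x - x^2/2) 0)) {0..1}"
      by (rule fundamental_theorem_of_calculus) (auto simp: has_real_derivative_iff_has_vector_derivative[symmetric] intro!: derivative_eq_intros)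
    then show ?thesis by (rule has_integral_eq[rotated]) (auto simp: tri_def)
  qed
  have "(tri has_integral 1) {-1..1}"
    using has_integral_combine[OF _ _ a b] by simp
  then show ?thesis
    by (rule has_integral_on_superset) (auto simp: tri_def)
qed

lemma tri_integrable: "integrable lborel tri"
  by (rule integrableI_nonneg)
     (use nn_integral_has_integral_lborel[OF tri_meas tri_nonneg tri_has_integral] tri_nonneg in auto)

definition Mtri :: "real measure" where "Mtri = density lborel (\<lambda>x. ennreal (tri x))"

lemma Mtri_real_distribution: "real_distribution Mtri"
proof -
  have "emeasure Mtri UNIV = (\<integral>\<^sup>+ x. ennreal (tri x) \<partial>lborel)"
    unfolding Mtri_def by (subst emeasure_density) auto
  also have "\<dots> = 1"
    using nn_integral_has_integral_lborel[OF tri_meas tri_nonneg tri_has_integral] by simp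
  finally have "emeasure Mtri UNIV = 1" .
  then show ?thesis
    unfolding real_distribution_def real_distribution_axioms_def
    by (auto intro!: prob_spaceI simp: Mtri_def)
qed


lemma ftc_piece:
  fixes t a b s' :: real
  assumes t: "t \<noteq> 0" and ab: "a \<le> b"
  defines "G \<equiv> (\<lambda>w::complex. exp (\<i> * of_real t * w) * ((of_real s' + w) / (\<i> * of_real t) + 1 / (of_real t)^2))"
  shows "((\<lambda>x. of_real (s' + x) * iexp (t * x)) has_integral (G (of_real b) - G (of_real a))) {a..b}"
proof -
  have d: "(G has_field_derivative (of_real s' + w) * exp (\<i> * of_real t * w)) (at w)" for w
  proof -
    have "(G has_field_derivative
       \<i> * of_real t * exp (\<i> * of_real t * w) * ((of_real s' + w) / (\<i> * of_real t) + 1 / (of_real t)^2)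
       + exp (\<i> * of_real t * w) * (1 / (\<i> * of_real t))) (at w)"
      unfolding G_def using t by (auto intro!: derivative_eq_intros)
    moreover have "\<i> * of_real t * exp (\<i> * of_real t * w) * ((of_real s' + w) / (\<i> * of_real t) + 1 / (of_real t)^2)
       + exp (\<i> * of_real t * w) * (1 / (\<i> * of_real t)) = (of_real s' + w) * exp (\<i> * of_real t * w)"
      using t by (auto simp: field_simps power2_eq_square)
    ultimately show ?thesis by simp
  qed
  have "((\<lambda>x. G (of_real x)) has_vector_derivative (of_real s' + of_real x) * exp (\<i> * of_real t * of_real x)) (at x within {a..b})" for x
    by (rule has_vector_derivative_real_field[OF d])
  then have "((\<lambda>x. (of_real s' + of_real x) * exp (\<i> * of_real t * of_real x)) has_integral (G (of_real b) - G (of_real a))) {a..b}"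
    by (intro fundamental_theorem_of_calculus[OF ab]) auto
  then show ?thesis by (simp add: mult.assoc)
qed

lemma tri_iexp_has_integral:
  fixes t :: real assumes t: "t \<noteq> 0"
  shows "((\<lambda>x. tri x *\<^sub>R iexp (t * x)) has_integral Hf (of_real t)) UNIV"
proof -
  define G1 where "G1 = (\<lambda>w::complex. exp (\<i> * of_real t * w) * ((of_real 1 + w) / (\<i> * of_real t) + 1 / (of_real t)^2))"
  define G2 where "G2 = (\<lambda>w::complex. exp (\<i> * of_real t * w) * ((of_real (-1) + w) / (\<i> * of_real t) + 1 / (of_real t)^2))"
  have a0: "((\<lambda>x. of_real (1 + x) * iexp (t * x)) has_integral (G1 (of_real 0) - G1 (of_real (-1)))) {-1..0}"
    unfolding G1_def by (rule ftc_piece[OF t]) simp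
  have a: "((\<lambda>x. tri x *\<^sub>R iexp (t * x)) has_integral (G1 (of_real 0) - G1 (of_real (-1)))) {-1..0}"
    by (rule has_integral_eq[rotated, OF a0]) (auto simp: tri_def scaleR_conv_of_real)
  have b0: "((\<lambda>x. of_real (-1 + x) * iexp (t * x)) has_integral (G2 (of_real 1) - G2 (of_real 0))) {0..1}"
    unfolding G2_def by (rule ftc_piece[OF t]) simp
  have b1: "((\<lambda>x. - (of_real (-1 + x) * iexp (t * x))) has_integral - (G2 (of_real 1) - G2 (of_real 0))) {0..1}"
    using has_integral_neg[OF b0] by simp
  have b: "((\<lambda>x. tri x *\<^sub>R iexp (t * x)) has_integral - (G2 (of_real 1) - G2 (of_real 0))) {0..1}"
    by (rule has_integral_eq[rotated, OF b1]) (auto simp: tri_def scaleR_conv_of_real algebra_simps)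
  have c: "((\<lambda>x. tri x *\<^sub>R iexp (t * x)) has_integral
      ((G1 (of_real 0) - G1 (of_real (-1))) + - (G2 (of_real 1) - G2 (of_real 0)))) {-1..1}"
    using has_integral_combine[OF _ _ a b] by simp
  have val: "(G1 (of_real 0) - G1 (of_real (-1))) + - (G2 (of_real 1) - G2 (of_real 0)) = Hf (of_real t)"
  proof -
    have "(G1 (of_real 0) - G1 (of_real (-1))) + - (G2 (of_real 1) - G2 (of_real 0))
        = (2 - (exp (\<i> * of_real t) + exp (-(\<i> * of_real t)))) / (of_real t)^2"
      unfolding G1_def G2_def using t by (simp add: field_simps power2_eq_square)
    also have "exp (\<i> * of_real t) + exp (-(\<i> * of_real t)) = 2 * cos (of_real t :: complex)"
      by (simp add: cos_exp_eq)
    finally show ?thesis using t by (simp add: Hf_real cos_of_real)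
  qed
  show ?thesis
    by (rule has_integral_on_superset[OF c[unfolded val]]) (auto simp: tri_def)
qed

lemma char_Mtri: "char Mtri t = Hf (of_real t)"
proof (cases "t = 0")
  case True
  then show ?thesis using real_distribution.char_zero[OF Mtri_real_distribution] by (simp add: Hf_0)
next
  case False
  have int: "integrable lborel (\<lambda>x. tri x *\<^sub>R iexp (t * x))"
    by (rule Bochner_Integration.integrable_bound[OF tri_integrable]) (auto simp: norm_mult tri_nonneg)
  have "char Mtri t = (\<integral>x. tri x *\<^sub>R iexp (t * x) \<partial>lborel)"
    unfolding char_def Mtri_def by (subst integral_density) (auto simp: tri_nonneg)
  also have "\<dots> = integral UNIV (\<lambda>x. tri x *\<^sub>R iexp (t * x))"
    using integral_lborel[OF int] by simp
  also have "\<dots> = Hf (of_real t)"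
    using tri_iexp_has_integral[OF False] by (rule integral_unique)
  finally show ?thesis .
qed


definition hh :: "real \<Rightarrow> complex" where "hh t = Hf (of_real t)"

lemma one_minus_cos_le: "1 - cos (t::real) \<le> t^2/2"
proof -
  have "cos t = 1 - 2 * sin (t/2)^2" using cos_double_sin[of "t/2"] by simp
  moreover have "sin (t/2)^2 \<le> (t/2)^2"
    using abs_sin_x_le_abs_x[of "t/2"] by (metis abs_ge_zero power2_abs power_mono)
  ultimately show ?thesis by (simp add: power_divide)
qed

lemma hh_cont: "continuous_on UNIV hh"
proof -
  have "continuous_on UNIV Hf" using Hf_holo holomorphic_on_imp_continuous_on by blast
  then show ?thesis unfolding hh_def
    by (rule continuous_on_compose2) (auto intro!: continuous_intros)
qed

lemma hh_meas[measurable]: "hh \<in> borel_measurable borel"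
  using hh_cont borel_measurable_continuous_onI by blast

lemma hh_bound: "norm (hh t) \<le> 8 * inverse (1 + t^2)"
proof (cases "t = 0")
  case True then show ?thesis by (simp add: hh_def Hf_0)
next
  case False
  have t2: "0 < t^2" using False by simp
  have eq: "hh t = of_real (2 * (1 - cos t) / t^2)" using Hf_real[OF False] by (simp add: hh_def)
  have nn: "0 \<le> 2 * (1 - cos t) / t^2" using cos_le_one[of t] by simp
  have le1: "2 * (1 - cos t) / t^2 \<le> 1"
    using one_minus_cos_le[of t] t2 by (simp add: field_simps)
  have le4: "2 * (1 - cos t) / t^2 \<le> 4 / t^2"
  proof -
    have "2 * (1 - cos t) \<le> 4" using cos_ge_minus_one[of t] by (smt (verit))
    then show ?thesis using t2 by (intro divide_right_mono) auto
  qed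
  have "2 * (1 - cos t) / t^2 \<le> 8 / (1 + t^2)"
  proof (cases "t^2 \<le> 1")
    case True
    have p: "0 < 1 + t^2" by (simp add: add_pos_nonneg)
    have "1 \<le> 8 / (1 + t^2)" using True p by (subst le_divide_eq_1_pos) auto
    then show ?thesis using le1 by linarith
  next
    case False
    have p: "0 < 1 + t^2" by (simp add: add_pos_nonneg)
    have "4 * (1 + t^2) \<le> 8 * t^2" using False by simp
    then have "4 / t^2 \<le> 8 / (1 + t^2)" using t2 p by (simp add: divide_simps)
    then show ?thesis using le4 by linarith
  qed
  then have "norm (of_real (2 * (1 - cos t) / t^2) :: complex) \<le> 8 / (1 + t^2)"
    using nn by (simp only: norm_of_real abs_of_nonneg)
  then show ?thesis using eq by (simp only: divide_inverse)
qed

lemma integrable_inv1sq: "integrable lborel (\<lambda>t::real. 8 * inverse (1 + t^2))"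
  using integrable_inverse_1_plus_square unfolding set_integrable_def einterval_eq_UNIV by simp

lemma hh_integrable: "integrable lborel hh"
  by (rule Bochner_Integration.integrable_bound[OF integrable_inv1sq]) (auto simp: hh_bound)

lemma CLBINT_tendsto:
  fixes f :: "real \<Rightarrow> complex"
  assumes f: "integrable lborel f"
  shows "(\<lambda>T::nat. CLBINT t=ereal (real_of_int (- int T))..ereal (real T). f t) \<longlonglongrightarrow> (\<integral>t. f t \<partial>lborel)"
proof -
  have eq: "(CLBINT t=ereal (real_of_int (- int T))..ereal (real T). f t) = (\<integral>t. indicator {- real T..real T} t *\<^sub>R f t \<partial>lborel)" for T :: nat
    by (subst interval_integral_Icc) (auto simp: set_lebesgue_integral_def)
  have "(\<lambda>T::nat. \<integral>t. indicator {- real T..real T} t *\<^sub>R f t \<partial>lborel) \<longlonglongrightarrow> (\<integral>t. f t \<partial>lborel)"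
  proof (rule integral_dominated_convergence[where w="\<lambda>t. norm (f t)"])
    show "f \<in> borel_measurable lborel" using f by auto
    show "(\<lambda>t. indicator {- real i..real i} t *\<^sub>R f t) \<in> borel_measurable lborel" for i
      using f by auto
    show "integrable lborel (\<lambda>t. norm (f t))" using f by auto
    show "AE x in lborel. (\<lambda>i. indicator {- real i..real i} x *\<^sub>R f x) \<longlonglongrightarrow> f x"
    proof (rule AE_I2)
      fix x :: real
      have "eventually (\<lambda>i. indicator {- real i..real i} x *\<^sub>R f x = f x) sequentially"
        unfolding eventually_sequentially
      proof (intro exI[of _ "nat \<lceil>\<bar>x\<bar>\<rceil>"] allI impI)
        fix n assume "nat \<lceil>\<bar>x\<bar>\<rceil> \<le> n"
        then have "\<bar>x\<bar> \<le> real n" by linarith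
        then have "x \<in> {- real n..real n}" by auto
        then show "indicator {- real n..real n} x *\<^sub>R f x = f x" by simp
      qed
      then show "(\<lambda>i. indicator {- real i..real i} x *\<^sub>R f x) \<longlonglongrightarrow> f x"
        by (rule tendsto_eventually)
    qed
    show "AE x in lborel. norm (indicator {- real i..real i} x *\<^sub>R f x) \<le> norm (f x)" for i
      by (auto simp: indicator_def)
  qed
  then show ?thesis unfolding eq .
qed


lemma Mtri_emeasure: "A \<in> sets borel \<Longrightarrow> emeasure Mtri A = (\<integral>\<^sup>+x. ennreal (tri x) * indicator A x \<partial>lborel)"
  unfolding Mtri_def by (subst emeasure_density) auto

lemma Mtri_point: "measure Mtri {a} = 0"
proof -
  have "emeasure Mtri {a} = (\<integral>\<^sup>+x. ennreal (tri x) * indicator {a} x \<partial>lborel)"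
    by (rule Mtri_emeasure) auto
  also have "\<dots> \<le> (\<integral>\<^sup>+x. indicator {a} x \<partial>lborel)"
    by (intro nn_integral_mono) (auto simp: indicator_def tri_le1)
  also have "\<dots> = 0" by simp
  finally show ?thesis by (simp add: measure_def)
qed

lemma Mtri_Ioc: "1 \<le> a \<or> b \<le> -1 \<Longrightarrow> measure Mtri {a<..b} = 0"
proof -
  assume ab: "1 \<le> a \<or> b \<le> -1"
  have "emeasure Mtri {a<..b} = (\<integral>\<^sup>+x. ennreal (tri x) * indicator {a<..b} x \<partial>lborel)"
    by (rule Mtri_emeasure) auto
  also have "(\<lambda>x. ennreal (tri x) * indicator {a<..b} x) = (\<lambda>x. 0)"
  proof -
    have "x \<in> {a<..b} \<Longrightarrow> tri x = 0" for x using ab by (intro tri_out) auto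
    then show ?thesis by (auto simp: fun_eq_iff indicator_def)
  qed
  finally show ?thesis by (simp add: measure_def)
qed

definition K :: "real \<Rightarrow> real \<Rightarrow> real \<Rightarrow> complex" where
  "K a b t = (iexp (-(t * a)) - iexp (-(t * b))) / (\<i> * of_real t)"

lemma K_meas[measurable]: "K a b \<in> borel_measurable borel"
proof -
  have c1: "continuous_on UNIV (\<lambda>t::real. iexp (-(t*a)) - iexp (-(t*b)))" by (intro continuous_intros)
  have c2: "continuous_on UNIV (\<lambda>t::real. \<i> * complex_of_real t)" by (intro continuous_intros)
  show ?thesis unfolding K_def
    by (intro borel_measurable_divide borel_measurable_continuous_onI c1 c2)
qed

lemma K_bound: "a \<le> b \<Longrightarrow> norm (K a b t) \<le> b - a"
proof (cases "t = 0")
  case True then show "a \<le> b \<Longrightarrow> ?thesis" by (simp add: K_def)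
next
  case False
  assume ab: "a \<le> b"
  have "K a b t = (- (iexp ((-t) * b) - iexp ((-t) * a))) / (- (\<i> * of_real (-t)))"
    unfolding K_def by simp
  also have "\<dots> = (iexp ((-t) * b) - iexp ((-t) * a)) / (\<i> * of_real (-t))"
    by (rule minus_divide_divide)
  finally have "K a b t = (iexp ((-t) * b) - iexp ((-t) * a)) / (\<i> * of_real (-t))" .
  then show ?thesis using Levy_Inversion_aux2[OF ab, of "-t"] False by simp
qed

lemma Kh_integrable: "a \<le> b \<Longrightarrow> integrable lborel (\<lambda>t. K a b t * hh t)"
  by (rule Bochner_Integration.integrable_bound[where f="\<lambda>t. (b - a) * norm (hh t)"])
     (auto intro!: hh_integrable mult_mono K_bound simp: norm_mult)

lemma Kint_zero:
  assumes ab: "a \<le> b" and out: "1 \<le> a \<or> b \<le> -1"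
  shows "(\<integral>t. K a b t * hh t \<partial>lborel) = 0"
proof -
  interpret real_distribution Mtri by (rule Mtri_real_distribution)
  have L: "(\<lambda>T. complex_of_real (1 / (2 * pi)) *
        (CLBINT t=ereal (real_of_int (- int T))..ereal (real T). K a b t * hh t))
      \<longlonglongrightarrow> complex_of_real (measure Mtri {a<..b})"
    using Levy_Inversion[OF ab Mtri_point Mtri_point] unfolding char_Mtri K_def hh_def by simp
  have L2: "(\<lambda>T. complex_of_real (1 / (2 * pi)) *
        (CLBINT t=ereal (real_of_int (- int T))..ereal (real T). K a b t * hh t))
      \<longlonglongrightarrow> complex_of_real (1 / (2 * pi)) * (\<integral>t. K a b t * hh t \<partial>lborel)"
    by (intro tendsto_mult tendsto_const CLBINT_tendsto Kh_integrable ab)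
  have "complex_of_real (1 / (2 * pi)) * (\<integral>t. K a b t * hh t \<partial>lborel) = 0"
    using LIMSEQ_unique[OF L2 L] Mtri_Ioc[OF out] by simp
  then show ?thesis by simp
qed


lemma iexp_lin: "cmod (iexp u - 1 - \<i> * of_real u) \<le> u^2 / 2"
proof -
  have A: "cmod (iexp u - (\<Sum>k\<le>1. (\<i> * of_real u)^k / fact k)) \<le> \<bar>u\<bar>^(Suc 1) / fact (Suc 1)"
    using iexp_approx1[of u 1] .
  have B: "(\<Sum>k\<le>1. (\<i> * of_real u)^k / fact k) = 1 + \<i> * of_real u" by simp
  have C: "\<bar>u\<bar>^(Suc 1) / fact (Suc 1) = u^2/2"
  proof -
    have "Suc 1 = 2" by simp
    then show ?thesis by (simp only:) simp
  qed
  have D: "iexp u - 1 - \<i> * of_real u = iexp u - (1 + \<i> * of_real u)" by simp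
  show ?thesis unfolding D using A unfolding B C .
qed

lemma lim_aux:
  fixes g :: "nat \<Rightarrow> complex"
  assumes "\<And>n. norm (g n - L) \<le> C / real (Suc n)"
  shows "g \<longlonglongrightarrow> L"
proof -
  have "(\<lambda>n. C / real (Suc n)) \<longlonglongrightarrow> 0"
    using LIMSEQ_Suc[OF lim_const_over_n[of C]] by simp
  moreover have ev: "eventually (\<lambda>n. norm (g n - L) \<le> C / real (Suc n)) sequentially"
    using assms by (intro always_eventually) auto
  ultimately have "(\<lambda>n. g n - L) \<longlonglongrightarrow> 0"
    using Lim_null_comparison[OF ev] by blast
  then show ?thesis by (rule LIM_zero_cancel)
qed

lemma alg1:
  fixes E F :: complex and t d :: real
  assumes t: "t \<noteq> 0" and d: "d \<noteq> 0"
  shows "of_real (1/d) * ((E - E * F) / (\<i> * of_real t)) - E = - E * (F - 1 - \<i> * of_real (-(t*d))) / (\<i> * of_real t * of_real d)"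
proof -
  have "\<i> * of_real t * of_real d \<noteq> (0::complex)" using t d by simp
  then show ?thesis using t d by (simp add: divide_simps) (simp add: algebra_simps)
qed

lemma alg2:
  fixes E F :: complex and t d :: real
  assumes t: "t \<noteq> 0" and d: "d \<noteq> 0"
  shows "of_real (1/d) * ((E * F - E) / (\<i> * of_real t)) - E = E * (F - 1 - \<i> * of_real (t*d)) / (\<i> * of_real t * of_real d)"
proof -
  have "\<i> * of_real t * of_real d \<noteq> (0::complex)" using t d by simp
  then show ?thesis using t d by (simp add: divide_simps) (simp add: algebra_simps)
qed

lemma approx1:
  assumes t: "t \<noteq> 0" and d: "0 < d"
  shows "norm (of_real (1/d) * K v (v + d) t - iexp (-(t * v))) \<le> \<bar>t\<bar> * d / 2"
proof -
  define E where "E = iexp (-(t * v))"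
  define F where "F = iexp (-(t*d))"
  have EF: "iexp (-(t * (v+d))) = E * F"
  proof -
    have "\<i> * complex_of_real (-(t * (v+d))) = \<i> * complex_of_real (-(t * v)) + \<i> * complex_of_real (-(t*d))"
      by (simp add: algebra_simps)
    then show ?thesis unfolding E_def F_def by (simp only: exp_add[symmetric])
  qed
  have "of_real (1/d) * K v (v + d) t - E = - E * (F - 1 - \<i> * of_real (-(t*d))) / (\<i> * of_real t * of_real d)"
    unfolding K_def EF E_def[symmetric] using alg1[OF t, of d E F] d by simp
  then have "norm (of_real (1/d) * K v (v + d) t - E) = cmod (F - 1 - \<i> * of_real (-(t*d))) / (\<bar>t\<bar> * d)"
    using d by (simp add: norm_mult norm_divide E_def)
  also have "\<dots> \<le> ((-(t*d))^2/2) / (\<bar>t\<bar> * d)"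
    unfolding F_def using t d by (intro divide_right_mono iexp_lin) auto
  also have "\<dots> = \<bar>t\<bar> * d / 2"
    using t d by (simp add: power2_eq_square abs_mult_self_eq divide_simps)
  finally show ?thesis unfolding E_def .
qed

lemma approx2:
  assumes t: "t \<noteq> 0" and d: "0 < d"
  shows "norm (of_real (1/d) * K (v - d) v t - iexp (-(t * v))) \<le> \<bar>t\<bar> * d / 2"
proof -
  define E where "E = iexp (-(t * v))"
  define F where "F = iexp (t*d)"
  have EF: "iexp (-(t * (v-d))) = E * F"
  proof -
    have "\<i> * complex_of_real (-(t * (v-d))) = \<i> * complex_of_real (-(t * v)) + \<i> * complex_of_real (t*d)"
      by (simp add: algebra_simps)
    then show ?thesis unfolding E_def F_def by (simp only: exp_add[symmetric])
  qed
  have "of_real (1/d) * K (v - d) v t - E = E * (F - 1 - \<i> * of_real (t*d)) / (\<i> * of_real t * of_real d)"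
    unfolding K_def EF E_def[symmetric] using alg2[OF t, of d E F] d by simp
  then have "norm (of_real (1/d) * K (v - d) v t - E) = cmod (F - 1 - \<i> * of_real (t*d)) / (\<bar>t\<bar> * d)"
    using d by (simp add: norm_mult norm_divide E_def)
  also have "\<dots> \<le> ((t*d)^2/2) / (\<bar>t\<bar> * d)"
    unfolding F_def using t d by (intro divide_right_mono iexp_lin) auto
  also have "\<dots> = \<bar>t\<bar> * d / 2"
    using t d by (simp add: power2_eq_square abs_mult_self_eq divide_simps)
  finally show ?thesis unfolding E_def .
qed


lemma hhat_lim:
  fixes a b :: "nat \<Rightarrow> real"
  assumes ab: "\<And>n. b n - a n = 1 / real (Suc n)"
    and zero: "\<And>n. (\<integral>t. K (a n) (b n) t * hh t \<partial>lborel) = 0"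
    and approx: "\<And>n t. t \<noteq> 0 \<Longrightarrow> norm (of_real (real (Suc n)) * K (a n) (b n) t - iexp (-(t * v))) \<le> \<bar>t\<bar> / 2 / real (Suc n)"
  shows "(\<integral>t. iexp (-(t * v)) * hh t \<partial>lborel) = 0"
proof -
  have abn: "a n \<le> b n" for n
  proof -
    have "0 \<le> 1 / real (Suc n)" by simp
    then show ?thesis using ab[of n] by linarith
  qed
  have L: "(\<lambda>n. \<integral>t. of_real (real (Suc n)) * K (a n) (b n) t * hh t \<partial>lborel)
        \<longlonglongrightarrow> (\<integral>t. iexp (-(t * v)) * hh t \<partial>lborel)"
  proof (rule integral_dominated_convergence[where w="\<lambda>t. norm (hh t)"])
    have c: "continuous_on UNIV (\<lambda>t. iexp (-(t * v)))" by (intro continuous_intros)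
    show "(\<lambda>t. iexp (-(t * v)) * hh t) \<in> borel_measurable lborel"
      using borel_measurable_times[OF borel_measurable_continuous_onI[OF c] hh_meas] by simp
    show "(\<lambda>t. of_real (real (Suc n)) * K (a n) (b n) t * hh t) \<in> borel_measurable lborel" for n
      using borel_measurable_times[OF borel_measurable_times[OF borel_measurable_const K_meas] hh_meas] by simp
    show "integrable lborel (\<lambda>t. norm (hh t))" using hh_integrable by auto
    show "AE t in lborel. (\<lambda>n. of_real (real (Suc n)) * K (a n) (b n) t * hh t) \<longlonglongrightarrow> iexp (-(t * v)) * hh t"
      using AE_lborel_singleton[of 0]
    proof eventually_elim
      case (elim t)
      have "(\<lambda>n. of_real (real (Suc n)) * K (a n) (b n) t) \<longlonglongrightarrow> iexp (-(t * v))"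
        by (rule lim_aux[where C="\<bar>t\<bar>/2"]) (use approx[OF elim] in auto)
      then show ?case by (intro tendsto_mult tendsto_const)
    qed
    show "AE t in lborel. norm (of_real (real (Suc n)) * K (a n) (b n) t * hh t) \<le> norm (hh t)" for n
    proof (rule AE_I2)
      fix t
      have "norm (K (a n) (b n) t) \<le> 1 / real (Suc n)" using K_bound[OF abn, of n t] ab[of n] by simp
      then have "real (Suc n) * norm (K (a n) (b n) t) \<le> 1"
        by (simp add: field_simps)
      have e: "norm (of_real (real (Suc n)) * K (a n) (b n) t * hh t) = (real (Suc n) * norm (K (a n) (b n) t)) * norm (hh t)"
        by (simp only: norm_mult norm_of_real)
      show "norm (of_real (real (Suc n)) * K (a n) (b n) t * hh t) \<le> norm (hh t)"
        unfolding e using mult_right_mono[OF \<open>real (Suc n) * norm (K (a n) (b n) t) \<le> 1\<close> norm_ge_zero[of "hh t"]] by simp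
    qed
  qed
  have E: "(\<lambda>n. \<integral>t. of_real (real (Suc n)) * K (a n) (b n) t * hh t \<partial>lborel) = (\<lambda>n. 0)"
    using zero by (simp add: mult.assoc)
  have L': "(\<lambda>n. 0::complex) \<longlonglongrightarrow> (\<integral>t. iexp (-(t * v)) * hh t \<partial>lborel)"
    using L unfolding E .
  show ?thesis using LIMSEQ_unique[OF tendsto_const L'] by simp
qed

lemma hhat_zero:
  assumes "1 < \<bar>v\<bar>"
  shows "(\<integral>t. iexp (-(t * v)) * hh t \<partial>lborel) = 0"
proof (cases "1 < v")
  case True
  show ?thesis
  proof (rule hhat_lim[where a="\<lambda>n. v" and b="\<lambda>n. v + 1 / real (Suc n)"])
    show "(\<integral>t. K v (v + 1 / real (Suc n)) t * hh t \<partial>lborel) = 0" for n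
      using True by (intro Kint_zero) auto
    show "norm (of_real (real (Suc n)) * K v (v + 1 / real (Suc n)) t - iexp (-(t * v))) \<le> \<bar>t\<bar> / 2 / real (Suc n)"
      if "t \<noteq> 0" for n t
      using approx1[OF that, of "1 / real (Suc n)" v] by (simp add: mult.commute)
  qed simp
next
  case False
  then have v: "v < -1" using assms by linarith
  show ?thesis
  proof (rule hhat_lim[where a="\<lambda>n. v - 1 / real (Suc n)" and b="\<lambda>n. v"])
    show "(\<integral>t. K (v - 1 / real (Suc n)) v t * hh t \<partial>lborel) = 0" for n
      using v by (intro Kint_zero) auto
    show "norm (of_real (real (Suc n)) * K (v - 1 / real (Suc n)) v t - iexp (-(t * v))) \<le> \<bar>t\<bar> / 2 / real (Suc n)"
      if "t \<noteq> 0" for n t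
      using approx2[OF that, of "1 / real (Suc n)" v] by (simp add: mult.commute)
  qed simp
qed


lemma Gf_real: "Gf R k (of_real t) = iexp (R * t) * (iexp t - 1) ^ Suc k * hh t"
  unfolding Gf_def hh_def by (simp add: mult.assoc)

lemma Gf_cont: "continuous_on UNIV (\<lambda>t. Gf R k (of_real t))"
proof -
  have "continuous_on UNIV (Gf R k)" using Gf_holo holomorphic_on_imp_continuous_on by blast
  then show ?thesis by (rule continuous_on_compose2) (auto intro!: continuous_intros)
qed

lemma Gf_meas[measurable]: "(\<lambda>t. Gf R k (of_real t)) \<in> borel_measurable borel"
  using Gf_cont borel_measurable_continuous_onI by blast

lemma Gf_bound: "norm (Gf R k (of_real t)) \<le> 2 ^ Suc k * norm (hh t)"
proof -
  have "norm (iexp t - 1) \<le> norm (iexp t) + norm (1::complex)" by (rule norm_triangle_ineq4)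
  then have "norm (iexp t - 1) \<le> 2" by (simp add: norm_exp_i_times)
  then have "norm ((iexp t - 1) ^ Suc k) \<le> 2 ^ Suc k"
    unfolding norm_power by (intro power_mono) auto
  then show ?thesis unfolding Gf_real norm_mult norm_exp_i_times
    by (intro mult_right_mono) auto
qed

lemma Gf_integrable: "integrable lborel (\<lambda>t. Gf R k (of_real t))"
proof (rule Bochner_Integration.integrable_bound[where f="\<lambda>t. 2 ^ Suc k * norm (hh t)"])
  show "integrable lborel (\<lambda>t. 2 ^ Suc k * norm (hh t))" using hh_integrable by auto
  show "(\<lambda>t. Gf R k (of_real t)) \<in> borel_measurable lborel" by simp
  have "norm (Gf R k (of_real x)) \<le> norm (2 ^ Suc k * norm (hh x))" for x
  proof -
    have "norm (2 ^ Suc k * norm (hh x)) = 2 ^ Suc k * norm (hh x)" by simp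
    then show ?thesis using Gf_bound[of R k x] by simp
  qed
  then show "AE x in lborel. norm (Gf R k (of_real x)) \<le> norm (2 ^ Suc k * norm (hh x))"
    by (intro AE_I2)
qed

lemma iexp_hh_integrable: "integrable lborel (\<lambda>t. iexp (-(t * v)) * hh t)"
proof -
  have c: "continuous_on UNIV (\<lambda>t. iexp (-(t * v)))" by (intro continuous_intros)
  show ?thesis
    by (rule Bochner_Integration.integrable_bound[OF hh_integrable])
       (auto simp: norm_mult norm_exp_i_times intro!: borel_measurable_times[OF borel_measurable_continuous_onI[OF c] hh_meas])
qed

lemma expand:
  "iexp (-(t * w)) * Gf R k (of_real t) =
    (\<Sum>m\<le>Suc k. (of_nat (Suc k choose m) * (-1) ^ (Suc k - m)) * (iexp (-(t * (w - R - real m))) * hh t))"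
proof -
  have "(iexp t - 1) ^ Suc k = (iexp t + (-1)) ^ Suc k" by simp
  also have "\<dots> = (\<Sum>m\<le>Suc k. of_nat (Suc k choose m) * iexp t ^ m * (-1) ^ (Suc k - m))"
    by (rule binomial_ring)
  finally have B: "(iexp t - 1) ^ Suc k = (\<Sum>m\<le>Suc k. of_nat (Suc k choose m) * iexp t ^ m * (-1) ^ (Suc k - m))" .
  have E: "iexp (-(t * w)) * iexp (R * t) * iexp t ^ m = iexp (-(t * (w - R - real m)))" for m
  proof -
    have "iexp t ^ m = exp (of_nat m * (\<i> * of_real t))" by (simp add: exp_of_nat_mult)
    then have "iexp (-(t * w)) * iexp (R * t) * iexp t ^ m
        = exp (\<i> * of_real (-(t * w)) + \<i> * of_real (R * t) + of_nat m * (\<i> * of_real t))"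
      by (simp only: exp_add)
    also have "\<i> * of_real (-(t * w)) + \<i> * of_real (R * t) + of_nat m * (\<i> * of_real t)
        = \<i> * of_real (-(t * (w - R - real m)))"
      by (simp add: algebra_simps)
    finally show ?thesis .
  qed
  have "iexp (-(t * w)) * Gf R k (of_real t) = (\<Sum>m\<le>Suc k. iexp (-(t * w)) * iexp (R * t) * (of_nat (Suc k choose m) * iexp t ^ m * (-1) ^ (Suc k - m)) * hh t)"
    unfolding Gf_real B by (simp only: sum_distrib_left sum_distrib_right mult.assoc)
  also have "\<dots> = (\<Sum>m\<le>Suc k. (of_nat (Suc k choose m) * (-1) ^ (Suc k - m)) * ((iexp (-(t * w)) * iexp (R * t) * iexp t ^ m) * hh t))"
    by (rule sum.cong) (simp_all add: ac_simps)
  also have "\<dots> = (\<Sum>m\<le>Suc k. (of_nat (Suc k choose m) * (-1) ^ (Suc k - m)) * (iexp (-(t * (w - R - real m))) * hh t))"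
    by (simp only: E)
  finally show ?thesis .
qed

lemma ghat_zero:
  assumes w: "w < R - 1 \<or> R + real k + 2 < w"
  shows "(\<integral>t. iexp (-(t * w)) * Gf R k (of_real t) \<partial>lborel) = 0"
proof -
  have "(\<integral>t. iexp (-(t * w)) * Gf R k (of_real t) \<partial>lborel) =
     (\<integral>t. (\<Sum>m\<le>Suc k. (of_nat (Suc k choose m) * (-1) ^ (Suc k - m)) * (iexp (-(t * (w - R - real m))) * hh t)) \<partial>lborel)"
    by (simp only: expand)
  also have "\<dots> = (\<Sum>m\<le>Suc k. \<integral>t. (of_nat (Suc k choose m) * (-1) ^ (Suc k - m)) * (iexp (-(t * (w - R - real m))) * hh t) \<partial>lborel)"
    by (rule Bochner_Integration.integral_sum) (rule integrable_mult_right, rule iexp_hh_integrable)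
  also have "\<dots> = (\<Sum>m\<le>Suc k. 0)"
  proof (rule sum.cong[OF refl])
    fix m assume m: "m \<in> {..Suc k}"
    have "1 < \<bar>w - R - real m\<bar>" using w m by auto
    then show "(\<integral>t. (of_nat (Suc k choose m) * (-1) ^ (Suc k - m)) * (iexp (-(t * (w - R - real m))) * hh t) \<partial>lborel) = 0"
      by (simp only: integral_mult_right_zero hhat_zero) simp
  qed
  finally show ?thesis by simp
qed


lemma T_meas: "(\<lambda>f. \<Sum>b\<in>Basis. f b *\<^sub>R b) \<in> (\<Pi>\<^sub>M b\<in>Basis. (lborel::real measure)) \<rightarrow>\<^sub>M (borel :: 'a::euclidean_space measure)"
  by measurable

lemma T_inner: "c \<in> Basis \<Longrightarrow> (\<Sum>b\<in>Basis. f b *\<^sub>R b) \<bullet> c = f (c::'a::euclidean_space)"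
  by (simp add: inner_sum_left inner_Basis if_distrib cong: if_cong)

lemma lborel_prod:
  fixes G :: "'a::euclidean_space \<Rightarrow> real \<Rightarrow> complex"
  assumes int: "\<And>b. b \<in> Basis \<Longrightarrow> integrable lborel (G b)"
  shows "integrable lborel (\<lambda>x. \<Prod>b\<in>Basis. G b (x \<bullet> b))"
    and "(\<integral>x. (\<Prod>b\<in>Basis. G b (x \<bullet> b)) \<partial>lborel) = (\<Prod>b\<in>Basis. \<integral>t. G b t \<partial>lborel)"
proof -
  interpret product_sigma_finite "\<lambda>_. lborel" by standard
  have meas: "(\<lambda>x. \<Prod>b\<in>Basis. G b (x \<bullet> b)) \<in> borel_measurable (borel :: 'a measure)"
  proof (rule borel_measurable_prod)
    fix b :: 'a assume "b \<in> Basis"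
    then have "G b \<in> borel_measurable borel" using int by auto
    then show "(\<lambda>x. G b (x \<bullet> b)) \<in> borel_measurable borel"
      by (rule measurable_compose[rotated]) (auto intro!: borel_measurable_continuous_onI continuous_intros)
  qed
  have eqf: "(\<lambda>f. (\<Prod>b\<in>Basis. G b ((\<Sum>c\<in>Basis. f c *\<^sub>R c) \<bullet> b))) = (\<lambda>f. \<Prod>b\<in>Basis. G b (f b))"
    by (intro ext prod.cong refl) (simp add: T_inner)
  have pint: "integrable (\<Pi>\<^sub>M b\<in>Basis. lborel) (\<lambda>f. \<Prod>b\<in>Basis. G b (f b))"
    by (rule product_integrable_prod) (auto intro: int)
  show "integrable lborel (\<lambda>x. \<Prod>b\<in>Basis. G b (x \<bullet> b))"
    unfolding lborel_eq[where 'a='a]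
    by (subst integrable_distr_eq[OF T_meas meas]) (simp add: eqf pint)
  show "(\<integral>x. (\<Prod>b\<in>Basis. G b (x \<bullet> b)) \<partial>lborel) = (\<Prod>b\<in>Basis. \<integral>t. G b t \<partial>lborel)"
    unfolding lborel_eq[where 'a='a]
    by (subst integral_distr[OF T_meas meas]) (simp add: eqf product_integral_prod int)
qed


lemma Basis_vec_range: "(Basis :: (real^'n::finite) set) = range (\<lambda>i. axis i 1)"
  by (auto simp: Basis_vec_def)

lemma axis_index_axis': "axis_index (axis i (1::real) :: real^'n::finite) = i"
proof -
  have "axis i (1::real) \<in> (Basis :: (real^'n) set)" by (simp add: Basis_vec_range)
  then have "axis i (1::real) = axis (axis_index (axis i (1::real) :: real^'n)) 1" by (rule axis_index)
  then show ?thesis by (simp add: axis_eq_axis)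
qed

lemma vec_prod:
  fixes F :: "'n::finite \<Rightarrow> real \<Rightarrow> complex"
  assumes int: "\<And>i. integrable lborel (F i)"
  shows "integrable lborel (\<lambda>z::real^'n. \<Prod>i\<in>UNIV. F i (z $ i))"
    and "(\<integral>z. (\<Prod>i\<in>UNIV. F i (z $ i)) \<partial>(lborel :: (real^'n) measure)) = (\<Prod>i\<in>UNIV. \<integral>t. F i t \<partial>lborel)"
proof -
  define G where "G b = F (axis_index b)" for b :: "real^'n"
  have inj: "inj (\<lambda>i::'n. axis i (1::real))" by (auto simp: inj_def axis_eq_axis)
  have eq: "(\<Prod>b\<in>Basis. G b (z \<bullet> b)) = (\<Prod>i\<in>UNIV. F i (z $ i))" for z :: "real^'n"
    unfolding Basis_vec_range by (subst prod.reindex[OF inj]) (simp add: G_def axis_index_axis' inner_axis)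
  have eq2: "(\<Prod>b\<in>Basis. \<integral>t. G b t \<partial>lborel) = (\<Prod>i\<in>UNIV. \<integral>t. F i t \<partial>lborel)"
    unfolding Basis_vec_range by (subst prod.reindex[OF inj]) (simp add: G_def axis_index_axis')
  have intG: "\<And>b. b \<in> Basis \<Longrightarrow> integrable lborel (G b)" unfolding G_def using int by blast
  show "integrable lborel (\<lambda>z::real^'n. \<Prod>i\<in>UNIV. F i (z $ i))"
    using lborel_prod(1)[of G, OF intG] unfolding eq .
  show "(\<integral>z. (\<Prod>i\<in>UNIV. F i (z $ i)) \<partial>(lborel :: (real^'n) measure)) = (\<Prod>i\<in>UNIV. \<integral>t. F i t \<partial>lborel)"
    using lborel_prod(2)[of G, OF intG] unfolding eq eq2 .
qed


lemma iter_pd_zero: "iter_pd is (\<lambda>_::real^'n::finite. 0::complex) = (\<lambda>_. 0)"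
  by (induction "is") (simp_all add: pd_def vector_derivative_const_at)

lemma smooth_zero: "smooth_fun (\<lambda>_::real^'n::finite. 0::complex)"
  unfolding smooth_fun_def iter_pd_zero by simp

lemma Pc0: "Pc R k (\<lambda>_. 0) = (\<lambda>z. \<Prod>i\<in>UNIV. Gf (R i) k (of_real (z $ i)))"
  by (simp add: Pc_def fun_eq_iff)

lemma factor_integrable: "integrable lborel (\<lambda>t. iexp (-(t * w)) * Gf r k (of_real t))"
proof -
  have c: "continuous_on UNIV (\<lambda>t. iexp (-(t * w)))" by (intro continuous_intros)
  show ?thesis
    by (rule Bochner_Integration.integrable_bound[OF Gf_integrable[of r k]])
       (auto simp: norm_mult norm_exp_i_times intro!: borel_measurable_times[OF borel_measurable_continuous_onI[OF c] Gf_meas])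
qed

lemma fourier_Pc:
  fixes R :: "'n::finite \<Rightarrow> real"
  shows "fourier (Pc R k (\<lambda>_. 0)) \<xi> = (\<Prod>i\<in>UNIV. \<integral>t. iexp (-(t * \<xi> $ i)) * Gf (R i) k (of_real t) \<partial>lborel)"
proof -
  have pw: "exp (- \<i> * complex_of_real (\<xi> \<bullet> z)) * Pc R k (\<lambda>_. 0) z
      = (\<Prod>i\<in>UNIV. iexp (-(z $ i * \<xi> $ i)) * Gf (R i) k (of_real (z $ i)))" for z :: "real^'n"
  proof -
    have "- \<i> * complex_of_real (\<xi> \<bullet> z) = (\<Sum>i\<in>UNIV. \<i> * complex_of_real (-(z $ i * \<xi> $ i)))"
      by (simp add: inner_vec_def sum_distrib_left algebra_simps sum_negf[symmetric])
    then have "exp (- \<i> * complex_of_real (\<xi> \<bullet> z)) = (\<Prod>i\<in>UNIV. iexp (-(z $ i * \<xi> $ i)))"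
    proof -
      have fin: "finite (UNIV :: 'n set)" by simp
      show "- \<i> * complex_of_real (\<xi> \<bullet> z) = (\<Sum>i\<in>UNIV. \<i> * complex_of_real (-(z $ i * \<xi> $ i))) \<Longrightarrow> ?thesis"
        by (simp only: exp_sum[OF fin])
    qed
    then show ?thesis unfolding Pc0 by (simp add: prod.distrib)
  qed
  show ?thesis
    unfolding fourier_def pw
    by (rule vec_prod(2)[of "\<lambda>i t. iexp (-(t * \<xi> $ i)) * Gf (R i) k (of_real t)"]) (rule factor_integrable)
qed

theorem theorem10:
  fixes X Y P1 P2 :: "'n::finite set" and k :: nat
  assumes "X \<inter> Y = {}" and "X \<union> Y = UNIV" and "X \<noteq> {}"
    and "P1 \<subseteq> X" and "P2 \<subseteq> Y"
    and "(X - P1) \<union> (Y - P2) \<noteq> {}"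
  shows "\<exists>u0 u1 :: real^'n \<Rightarrow> complex.
           smooth_fun u0 \<and> smooth_fun u1 \<and>
           integrable lborel u0 \<and> integrable lborel u1 \<and>
           (u0 \<noteq> (\<lambda>_. 0) \<or> u1 \<noteq> (\<lambda>_. 0)) \<and>
           fsupp u0 \<union> fsupp u1 \<subseteq> {\<xi>. pnorm Y \<xi> < pnorm X \<xi>} \<and>
           vanish_order k {z. \<forall>i \<in> (X - P1) \<union> (Y - P2). z $ i = 0} u0 \<and>
           vanish_order k {z. \<forall>i \<in> (X - P1) \<union> (Y - P2). z $ i = 0} u1"
proof -
  obtain a where a: "a \<in> X" using assms(3) by blast
  obtain j where j: "j \<in> (X - P1) \<union> (Y - P2)" using assms(6) by blast
  define Kc :: real where "Kc = real k + 2"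
  define n :: real where "n = real CARD('n)"
  define Rb where "Rb = 1 + (n + 1) * Kc"
  define R where "R = (\<lambda>i. if i = a then Rb else (0::real))"
  define u0 where "u0 = Pc R k (\<lambda>_. 0)"
  have Kc2: "2 \<le> Kc" unfolding Kc_def by simp
  have n0: "0 \<le> n" unfolding n_def by simp
  have smooth0: "smooth_fun u0" unfolding u0_def by (rule smooth_Pc)
  have int0: "integrable lborel u0"
    unfolding u0_def Pc0 by (rule vec_prod(1)) (rule Gf_integrable)
  have nz: "u0 \<noteq> (\<lambda>_. 0)"
  proof
    assume "u0 = (\<lambda>_. 0)"
    then have "u0 (\<chi> i. pi) = 0" by simp
    moreover have "Gf (R i) k (of_real pi) \<noteq> 0" for i
    proof -
      have "hh pi = of_real (2 * (1 - cos pi) / pi^2)" unfolding hh_def using Hf_real[of pi] by simp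
      then have h: "hh pi \<noteq> 0" by simp
      have e: "iexp pi - 1 = -2" by simp
      show ?thesis unfolding Gf_real e using h by simp
    qed
    ultimately show False unfolding u0_def Pc0 by simp
  qed
  define lo where "lo i = R i - 1" for i
  define hi where "hi i = R i + real k + 2" for i
  define B where "B = {\<xi> :: real^'n. \<forall>i. lo i \<le> \<xi> $ i \<and> \<xi> $ i \<le> hi i}"
  have Bclosed: "closed B"
    unfolding B_def by (intro closed_Collect_all closed_Collect_conj closed_Collect_le) (auto intro!: continuous_intros)
  have supp_B: "{\<xi>. fourier u0 \<xi> \<noteq> 0} \<subseteq> B"
  proof
    fix \<xi> assume "\<xi> \<in> {\<xi>. fourier u0 \<xi> \<noteq> 0}"
    then have ne: "fourier u0 \<xi> \<noteq> 0" by simp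
    show "\<xi> \<in> B"
    proof (rule ccontr)
      assume "\<xi> \<notin> B"
      then have "\<exists>i. \<xi> $ i < R i - 1 \<or> R i + real k + 2 < \<xi> $ i"
        unfolding B_def lo_def hi_def by (auto simp: not_le)
      then obtain i where i: "\<xi> $ i < R i - 1 \<or> R i + real k + 2 < \<xi> $ i" by blast
      have "(\<integral>t. iexp (-(t * \<xi> $ i)) * Gf (R i) k (of_real t) \<partial>lborel) = 0"
        by (rule ghat_zero[OF i])
      then have "fourier u0 \<xi> = 0" unfolding u0_def fourier_Pc by (auto intro: bexI[of _ i])
      with ne show False by simp
    qed
  qed
  have B_cone: "B \<subseteq> {\<xi>. pnorm Y \<xi> < pnorm X \<xi>}"
  proof
    fix \<xi> assume xi: "\<xi> \<in> B"
    have aY: "a \<notin> Y" using a assms(1) by blast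
    have ya: "\<xi> $ i ^ 2 \<le> Kc ^ 2" if "i \<in> Y" for i
    proof -
      have "i \<noteq> a" using that aY by blast
      moreover have "lo i \<le> \<xi> $ i \<and> \<xi> $ i \<le> hi i" using xi unfolding B_def by blast
      ultimately have "-1 \<le> \<xi> $ i \<and> \<xi> $ i \<le> Kc" unfolding lo_def hi_def R_def Kc_def by simp
      then have "\<bar>\<xi> $ i\<bar> \<le> Kc" using Kc2 by linarith
      then show ?thesis by (metis abs_ge_zero power2_abs power_mono)
    qed
    have "lo a \<le> \<xi> $ a" using xi unfolding B_def by blast
    then have xa: "(n + 1) * Kc \<le> \<xi> $ a" unfolding lo_def R_def Rb_def by simp
    have "(\<Sum>i\<in>Y. \<xi> $ i ^ 2) \<le> (\<Sum>i\<in>Y. Kc ^ 2)" by (rule sum_mono) (rule ya)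
    also have "\<dots> = real (card Y) * Kc ^ 2" by simp
    also have "\<dots> \<le> n * Kc ^ 2"
      unfolding n_def by (intro mult_right_mono) (auto intro: card_mono)
    also have "\<dots> < ((n + 1) * Kc) ^ 2"
    proof -
      have "n < (n + 1) ^ 2" using n0 by (simp add: power2_eq_square algebra_simps) (smt (verit) mult_nonneg_nonneg n0)
      moreover have "0 < Kc ^ 2" using Kc2 by simp
      ultimately show ?thesis by (simp add: power_mult_distrib)
    qed
    also have "\<dots> \<le> \<xi> $ a ^ 2"
      using xa n0 Kc2 by (intro power_mono) auto
    also have "\<dots> \<le> (\<Sum>i\<in>X. \<xi> $ i ^ 2)"
      by (rule member_le_sum) (use a in auto)
    finally have "(\<Sum>i\<in>Y. \<xi> $ i ^ 2) < (\<Sum>i\<in>X. \<xi> $ i ^ 2)" .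
    then show "\<xi> \<in> {\<xi>. pnorm Y \<xi> < pnorm X \<xi>}" unfolding pnorm_def by (simp add: real_sqrt_less_mono)
  qed
  have fs0: "fsupp u0 \<subseteq> {\<xi>. pnorm Y \<xi> < pnorm X \<xi>}"
    unfolding fsupp_def using closure_minimal[OF supp_B Bclosed] B_cone by blast
  have fs1: "fsupp (\<lambda>_::real^'n. 0::complex) = {}"
    unfolding fsupp_def fourier_def by simp
  have van0: "vanish_order k {z. \<forall>i \<in> (X - P1) \<union> (Y - P2). z $ i = 0} u0"
    unfolding vanish_order_def
  proof (intro allI impI)
    fix "is" :: "'n list" and z :: "real^'n"
    assume len: "length is \<le> k" and z: "z \<in> {z. \<forall>i \<in> (X - P1) \<union> (Y - P2). z $ i = 0}"
    have zj: "z $ j = 0" using z j by auto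
    have cnt: "count_list is j \<le> k" using count_le_length[of "is" j] len by linarith
    have "(deriv ^^ (0 + count_list is j)) (Gf (R j) k) (of_real (z $ j)) = 0"
      using Gf_vanish[OF cnt, of "R j"] zj by simp
    then show "iter_pd is u0 z = 0"
      unfolding u0_def iter_pd_Pc Pc_def by (auto intro: bexI[of _ j])
  qed
  have van1: "vanish_order k {z. \<forall>i \<in> (X - P1) \<union> (Y - P2). z $ i = 0} (\<lambda>_::real^'n. 0::complex)"
    unfolding vanish_order_def iter_pd_zero by simp
  show ?thesis
    by (intro exI[of _ u0] exI[of _ "\<lambda>_. 0"] conjI smooth0 smooth_zero int0 disjI1 nz van0 van1)
       (use fs0 fs1 in auto)
qed


end
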